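(* Let $(P_n(x))_{n\ge0}$ be a sequence of polynomials such that $\sum_{n\ge0}P_n(x)\frac{t^n}{n!}=f(t)e^{xt}$ for some $f$ holomorphic at $0$ with $f(0)\neq0$, and such that $P_n(1-x)=(-1)^nP_n(x)$ for all $n\ge0$. Let $N$ be a positive integer. If the function $F(t)=f(t)-\sum_{k=0}^{N}B_k(0)\frac{t^k}{k!}$ is even, then $P_n(x)=B_n(x)$ for all $n\ge0$ and $f(t)=\frac{t}{e^t-1}$.
   Context: $B_n(x)$ denotes the Bernoulli polynomials, defined by $\sum_{n\ge0}B_n(x)\frac{t^n}{n!}=\frac{te^{xt}}{e^t-1}$; $B_k(0)$ are the Bernoulli numbers. *)

theory Defs
  imports "HOL-Complex_Analysis.Complex_Analysis"
          "HOL-Computational_Algebra.Polynomial"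
          "HOL-Computational_Algebra.Formal_Power_Series"
begin

definition bernpoly :: "nat \<Rightarrow> complex \<Rightarrow> complex" where
  "bernpoly n x = fact n * fps_nth (fps_X * fps_exp x / (fps_exp 1 - 1)) n"

end

theory Submission imports Defs begin

lemma E1_ne: "(fps_exp (1::complex) - 1) \<noteq> 0"
proof
  assume "fps_exp (1::complex) - 1 = 0"
  hence "(fps_exp (1::complex) - 1) $ 1 = 0" by simp
  thus False by simp
qed

lemma bern_mult: "(fps_exp (1::complex) - 1) * (fps_X / (fps_exp 1 - 1)) = fps_X"
proof -
  have "subdegree (fps_exp (1::complex) - 1) \<le> 1" by (intro subdegree_leI) simp
  hence "fps_X / (fps_exp (1::complex) - 1) * (fps_exp 1 - 1) = fps_X"
    by (intro fps_times_divide_eq E1_ne) simp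
  thus ?thesis by (simp add: mult.commute)
qed

lemma bern_flip:
  defines "b \<equiv> fps_X / (fps_exp (1::complex) - 1)"
  shows "(-1)^k * b $ k = b $ k + (if k = 1 then 1 else 0)"
proof -
  let ?E = "fps_exp (1::complex)"
  let ?c = "- fps_X :: complex fps"
  have c0: "?c $ 0 = 0" by simp
  have "((?E - 1) * b) oo ?c = ((?E - 1) oo ?c) * (b oo ?c)"
    by (rule fps_compose_mult_distrib[OF c0])
  also have "(?E - 1) oo ?c = fps_exp (-1) - 1"
    by (simp add: fps_compose_sub_distrib)
  finally have h1: "(fps_exp (-1) - 1) * (b oo ?c) = - fps_X"
    using bern_mult unfolding b_def
    by (simp add: fps_X_fps_compose_startby0)
  have ee: "?E * fps_exp (-1) = 1"
    using fps_exp_add_mult[of "1::complex" "-1"] by simp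
  have "?E * ((fps_exp (-1) - 1) * (b oo ?c)) = ?E * (- fps_X)" using h1 by simp
  hence "(1 - ?E) * (b oo ?c) = - (?E * fps_X)"
    by (simp add: algebra_simps ee mult.assoc[symmetric])
  hence h2: "(?E - 1) * (b oo ?c) = ?E * fps_X"
    by (metis minus_diff_eq minus_mult_left neg_equal_iff_equal)
  have h3: "(?E - 1) * (b + fps_X) = ?E * fps_X"
    using bern_mult unfolding b_def by (simp add: algebra_simps)
  have "b oo ?c = b + fps_X"
    using h2 h3 E1_ne by (metis mult_left_cancel)
  hence "(b oo ?c) $ k = (b + fps_X) $ k" by simp
  moreover have "(b oo ?c) $ k = (-1)^k * b $ k" by (simp add: fps_compose_uminus')
  moreover have "(b + fps_X) $ k = b $ k + (if k = 1 then 1 else 0)" by simp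
  ultimately show ?thesis by simp
qed

lemma Sdiff:
  assumes "N > 0"
  shows "(\<Sum>k\<le>N. bernpoly k 0 * (- t) ^ k / fact k) - (\<Sum>k\<le>N. bernpoly k 0 * t ^ k / fact k) = t"
proof -
  define b where "b = fps_X / (fps_exp (1::complex) - 1)"
  have bp: "bernpoly k 0 = fact k * b $ k" for k
    by (simp add: bernpoly_def b_def)
  have "(\<Sum>k\<le>N. bernpoly k 0 * (- t) ^ k / fact k) - (\<Sum>k\<le>N. bernpoly k 0 * t ^ k / fact k)
      = (\<Sum>k\<le>N. t ^ k * ((-1)^k * b $ k - b $ k))"
    unfolding sum_subtractf[symmetric]
  proof (intro sum.cong refl)
    fix k
    have "(-t)^k = (-1)^k * t^k" by (rule power_minus)
    hence "bernpoly k 0 * (- t) ^ k / fact k = (-1)^k * b $ k * t^k"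
      unfolding bp by simp
    moreover have "bernpoly k 0 * t ^ k / fact k = b $ k * t^k"
      unfolding bp by simp
    ultimately show "bernpoly k 0 * (- t) ^ k / fact k - bernpoly k 0 * t ^ k / fact k
        = t ^ k * ((-1)^k * b $ k - b $ k)" by (simp add: algebra_simps)
  qed
  also have "\<dots> = (\<Sum>k\<le>N. (if k = 1 then t else 0))"
  proof (intro sum.cong refl)
    fix k
    have "(-1)^k * b $ k = b $ k + (if k = 1 then 1 else 0)"
      unfolding b_def by (rule bern_flip)
    thus "t ^ k * ((-1)^k * b $ k - b $ k) = (if k = 1 then t else 0)" by simp
  qed
  also have "\<dots> = t" using assms by (simp add: sum.delta)
  finally show ?thesis .
qed

theorem mainTheorem5:
  fixes P :: "nat \<Rightarrow> complex poly" and f :: "complex \<Rightarrow> complex" and N :: nat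
  assumes f_hol: "f analytic_on {0}"
    and f0: "f 0 \<noteq> 0"
    and gen: "\<And>x. \<forall>\<^sub>F t in nhds 0.
                 (\<lambda>n. poly (P n) x * t ^ n / fact n) sums (f t * exp (x * t))"
    and sym: "\<And>n x. poly (P n) (1 - x) = (-1) ^ n * poly (P n) x"
    and N_pos: "N > 0"
    and F_even: "\<forall>\<^sub>F t in nhds 0.
                   f (- t) - (\<Sum>k\<le>N. bernpoly k 0 * (- t) ^ k / fact k)
                 = f t - (\<Sum>k\<le>N. bernpoly k 0 * t ^ k / fact k)"
  shows "(\<forall>n x. poly (P n) x = bernpoly n x)
       \<and> (\<forall>\<^sub>F t in nhds 0. f t = (if t = 0 then 1 else t / (exp t - 1)))"
proof -
  have lim_neg: "filterlim (\<lambda>t::complex. - t) (nhds 0) (nhds 0)"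
  proof -
    have "((\<lambda>t::complex. - t) \<longlongrightarrow> - 0) (nhds 0)" by (rule tendsto_minus[OF filterlim_ident])
    thus ?thesis by simp
  qed
  have ev0neg: "\<forall>\<^sub>F t in nhds 0. (\<lambda>n. poly (P n) 0 * (-t) ^ n / fact n) sums (f (-t))"
    using eventually_compose_filterlim[OF gen[of 0] lim_neg] by simp
  have symA: "\<forall>\<^sub>F t in nhds 0. f (- t) = f t * exp t"
    using ev0neg gen[of 1]
  proof eventually_elim
    case (elim t)
    have "(\<lambda>n. poly (P n) 1 * t ^ n / fact n) = (\<lambda>n. poly (P n) 0 * (-t) ^ n / fact n)"
    proof
      fix n
      have "poly (P n) 1 = (-1)^n * poly (P n) 0" using sym[of n 0] by simp
      thus "poly (P n) 1 * t ^ n / fact n = poly (P n) 0 * (-t) ^ n / fact n"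
        by (simp add: power_minus[of t n])
    qed
    with elim show ?case using sums_unique2 by fastforce
  qed
  have C: "\<forall>\<^sub>F t in nhds 0. f t * (exp t - 1) = t"
    using symA F_even
  proof eventually_elim
    case (elim t)
    hence "f (-t) - f t = t" using Sdiff[OF N_pos, of t] by (simp add: algebra_simps)
    thus ?case using elim(1) by (simp add: algebra_simps)
  qed
  have f01: "f 0 = 1"
  proof -
    have d: "((\<lambda>y. (exp y - exp 0) / (y - 0)) \<longlongrightarrow> exp (0::complex)) (at 0)"
      using has_field_derivative_iff[THEN iffD1, OF DERIV_exp[of "0::complex"]] by simp
    have "isCont f 0" by (rule analytic_at_imp_isCont[OF f_hol])
    hence "(f \<longlongrightarrow> f 0) (at 0)" by (simp add: isCont_def)
    from tendsto_mult[OF this d] have l1: "((\<lambda>y. f y * ((exp y - 1) / y)) \<longlongrightarrow> f 0) (at 0)" by simp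
    have "\<forall>\<^sub>F y in at 0. f y * ((exp y - 1) / y) = 1"
      unfolding eventually_at_filter using C by eventually_elim auto
    hence "((\<lambda>y. f y * ((exp y - 1) / y)) \<longlongrightarrow> 1) (at 0)"
      by (rule tendsto_eventually)
    from tendsto_unique[OF _ l1 this] show ?thesis by simp
  qed
  have part2: "\<forall>\<^sub>F t in nhds 0. f t = (if t = 0 then 1 else t / (exp t - 1))"
    using C
  proof eventually_elim
    case (elim t)
    show ?case
    proof (cases "t = 0")
      case True thus ?thesis using f01 by simp
    next
      case False
      hence "exp t - 1 \<noteq> 0" using elim by auto
      thus ?thesis using elim False by (simp add: field_simps)
    qed
  qed
  have part1: "poly (P n) x = bernpoly n x" for n x
  proof -
    define G where "G = Abs_fps (\<lambda>n. poly (P n) x / fact n)"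
    have eqf: "(\<lambda>n. poly (P n) x * t ^ n / fact n) = (\<lambda>n. G $ n * t ^ n)" for t
      by (auto simp: G_def)
    obtain e where e: "e > 0" "\<And>t. dist t 0 < e \<Longrightarrow> (\<lambda>n. poly (P n) x * t ^ n / fact n) sums (f t * exp (x * t))"
      using gen[of x] unfolding eventually_nhds_metric by blast
    have "(\<lambda>n. G $ n * (complex_of_real (e/2)) ^ n) sums (f (e/2) * exp (x * (e/2)))"
      using e(2)[of "complex_of_real (e/2)"] e(1) unfolding eqf by simp
    hence "conv_radius (fps_nth G) \<ge> norm (complex_of_real (e/2))"
      by (intro conv_radius_geI) (auto simp: sums_iff)
    moreover have "norm (complex_of_real (e/2)) = e/2" using e(1) by simp
    ultimately have "conv_radius (fps_nth G) \<ge> ereal (e/2)" by simp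
    moreover have "ereal 0 < ereal (e/2)" using e(1) by simp
    ultimately have rad: "fps_conv_radius G > 0" unfolding fps_conv_radius_def
      using zero_ereal_def by (metis order_less_le_trans)
    have H1: "(\<lambda>t. f t * exp (x * t)) has_fps_expansion G"
      unfolding has_fps_expansion_def
    proof (intro conjI rad)
      show "\<forall>\<^sub>F z in nhds 0. eval_fps G z = f z * exp (x * z)"
        using gen[of x] by eventually_elim (auto simp: eval_fps_def eqf sums_iff)
    qed
    have H2: "(\<lambda>t. (exp t - 1) * (f t * exp (x * t))) has_fps_expansion (fps_exp 1 - 1) * G"
      by (intro has_fps_expansion_mult H1 has_fps_expansion_diff has_fps_expansion_exp1 has_fps_expansion_1)
    have H3: "(\<lambda>t. t * exp (x * t)) has_fps_expansion fps_X * fps_exp x"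
      by (intro has_fps_expansion_mult has_fps_expansion_fps_X has_fps_expansion_exp)
    have "\<forall>\<^sub>F t in nhds 0. (exp t - 1) * (f t * exp (x * t)) = t * exp (x * t)"
      using C
    proof eventually_elim
      case (elim t)
      have "(exp t - 1) * (f t * exp (x * t)) = (f t * (exp t - 1)) * exp (x * t)"
        by (simp only: mult_ac)
      thus ?case using elim by simp
    qed
    hence H2': "(\<lambda>t. t * exp (x * t)) has_fps_expansion (fps_exp 1 - 1) * G"
      using has_fps_expansion_cong[OF _ refl, THEN iffD1, of "\<lambda>t. (exp t - 1) * (f t * exp (x * t))" "\<lambda>t. t * exp (x * t)"] H2 by blast
    have eq: "(fps_exp 1 - 1) * G = fps_X * fps_exp x"
      by (rule fps_expansion_unique_complex[OF H2' H3])
    have "G = fps_X * fps_exp x / (fps_exp 1 - 1)"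
    proof -
      have "G * (fps_exp 1 - 1) = fps_X * fps_exp x" using eq by (simp only: mult.commute)
      thus ?thesis using fps_divide_times_eq[OF E1_ne, of G] by simp
    qed
    hence "bernpoly n x = fact n * G $ n" by (simp add: bernpoly_def)
    also have "\<dots> = poly (P n) x" by (simp add: G_def)
    finally show ?thesis by simp
  qed
  show ?thesis using part1 part2 by blast
qed

end
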